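(* Let $a, b$ be positive integers with $b>1$ and let $i \ge 3$ be an integer with $\gcd(r_b(i),a) = \gcd(r_b(i-1),a) = 1$. Then $\omega \in \operatorname{Ap}(S_a(b,i))$ if and only if either $\omega = b\, a^{(i)}_i$, or there exist $\omega' \in \operatorname{Ap}(S_a(b,i-1))$ and $u_i \in \{0,\ldots,b-1\}$ such that \[\omega = \omega' + b^{i-1}\, \mathsf{m}_{S_a(b,i-1)}(\omega') + u_i\, a^{(i)}_i.\]
   Context: For $\ell \ge 1$, $r_b(\ell) = \sum_{j=0}^{\ell-1} b^j$, and $r_b(0)=0$. For integers $m\ge 2$ and $j\ge 1$, $a^{(m)}_j := r_b(m) + a\, r_b(j-1)$, and $S_a(b,m)$ is the submonoid of $\mathbb{N}$ generated by $\{a^{(m)}_j : j\ge 1\}$; when $\gcd(r_b(m),a)=1$ it is a numerical semigroup minimally generated by $a^{(m)}_1,\ldots,a^{(m)}_m$. $\operatorname{Ap}(S) = \{\omega\in S : \omega - \operatorname{m}(S) \notin S\}$ with $\operatorname{m}(S)$ the smallest nonzero element. For $\omega' \in \operatorname{Ap}(S_a(b,m))$, $\mathsf{m}_{S_a(b,m)}(\omega')$ denotes the (unique) length of $\omega'$, i.e. the unique value of $\sum_j u_j$ over all expressions $\omega' = \sum_{j=1}^m u_j a^{(m)}_j$ with $u_j\in\mathbb{N}$ (such length is unique for elements of this Apéry set). *)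

theory Defs
  imports Main
begin

definition rep :: "nat \<Rightarrow> nat \<Rightarrow> nat" where
  "rep b l = (\<Sum>j<l. b ^ j)"

definition gen :: "nat \<Rightarrow> nat \<Rightarrow> nat \<Rightarrow> nat \<Rightarrow> nat" where
  "gen a b m j = rep b m + a * rep b (j - 1)"

inductive_set submonoid_gen :: "nat set \<Rightarrow> nat set" for G where
  zero: "0 \<in> submonoid_gen G"
| step: "x \<in> submonoid_gen G \<Longrightarrow> g \<in> G \<Longrightarrow> x + g \<in> submonoid_gen G"

definition Sab :: "nat \<Rightarrow> nat \<Rightarrow> nat \<Rightarrow> nat set" where
  "Sab a b m = submonoid_gen {gen a b m j | j. j \<ge> 1}"

definition multiplicity_ns :: "nat set \<Rightarrow> nat" where
  "multiplicity_ns S = (LEAST x. x \<in> S \<and> x \<noteq> 0)"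

definition Apery :: "nat set \<Rightarrow> nat set" where
  "Apery S = {w \<in> S. int w - int (multiplicity_ns S) \<notin> int ` S}"

(* length of an element w.r.t. the generators a^{(m)}_1..a^{(m)}_m
   (the unique value of sum u_j over expressions w = sum u_j a^{(m)}_j) *)
definition len_S :: "nat \<Rightarrow> nat \<Rightarrow> nat \<Rightarrow> nat \<Rightarrow> nat" where
  "len_S a b m w = (THE l. \<exists>u :: nat \<Rightarrow> nat.
      w = (\<Sum>j=1..m. u j * gen a b m j) \<and> l = (\<Sum>j=1..m. u j))"

end

theory Submission
  imports Defs
begin


lemma rep_0[simp]: "rep b 0 = 0" by (simp add: rep_def)
lemma rep_Suc: "rep b (Suc k) = rep b k + b ^ k" by (simp add: rep_def)
lemma rep_Suc2: "rep b (Suc k) = b * rep b k + 1"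
proof (induction k)
  case 0 then show ?case by (simp add: rep_def)
next
  case (Suc k)
  have "rep b (Suc (Suc k)) = rep b (Suc k) + b ^ Suc k" by (rule rep_Suc)
  also have "\<dots> = b * (rep b k + b ^ k) + 1" using Suc by (simp add: algebra_simps)
  also have "\<dots> = b * rep b (Suc k) + 1" by (simp add: rep_Suc)
  finally show ?case .
qed

lemma divmod_h: "(r::nat) > 0 \<Longrightarrow> c < r \<Longrightarrow> (q * r + c) div r = q \<and> (q * r + c) mod r = c"
  by simp
lemma rep_pos: "b > 0 \<Longrightarrow> k \<ge> 1 \<Longrightarrow> rep b k > 0"
  by (cases k) (auto simp: rep_Suc)
lemma rep_add: "rep b (m + p) = rep b p + b ^ p * rep b m"
  by (induction m) (auto simp: rep_Suc algebra_simps power_add)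

primrec G :: "nat \<Rightarrow> nat \<Rightarrow> nat \<Rightarrow> nat" where
  "G b 0 n = 0"
| "G b (Suc k) n = n div rep b k + G b k (n mod rep b k)"

lemma G_0[simp]: "G b k 0 = 0" by (induction k) auto

lemma G_top: "G b (Suc k) (b * rep b k) \<le> b"
proof (cases "rep b k = 0")
  case True then show ?thesis by simp
next
  case False then show ?thesis by simp
qed

lemma G_top_eq: "b > 0 \<Longrightarrow> k \<ge> 1 \<Longrightarrow> G b (Suc k) (b * rep b k) = b"
  using rep_pos[of b k] by simp

lemma G_r_minus1: "b > 0 \<Longrightarrow> G b k (rep b k - 1) \<le> b"
proof (cases k)
  case 0 then show ?thesis by simp
next
  case (Suc k') then show ?thesis using G_top[of b k'] by (simp add: rep_Suc2)
qed

lemma G_L1: "b > 0 \<Longrightarrow> G b k y \<le> G b k (y + 1) + (b - 1)"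
proof (induction k arbitrary: y)
  case 0 then show ?case by simp
next
  case (Suc k)
  define r where "r = rep b k"
  show ?case
  proof (cases "r = 0")
    case True then have "\<not> (1 \<le> k)" using rep_pos[OF Suc.prems, of k] by (auto simp: r_def)
    then have "k = 0" by simp
    then show ?thesis by simp
  next
    case False
    define q where "q = y div r"
    define \<rho> where "\<rho> = y mod r"
    have y: "y = q * r + \<rho>" and rl: "\<rho> < r" using False by (auto simp: q_def \<rho>_def)
    show ?thesis
    proof (cases "\<rho> + 1 < r")
      case True
      have "(y+1) div r = q" "(y+1) mod r = \<rho> + 1"
        using divmod_h[of r "\<rho>+1" q] True y False by (auto simp: add.assoc)
      moreover have "y div r = q" "y mod r = \<rho>" using q_def \<rho>_def by auto
      ultimately show ?thesis using Suc.IH[OF Suc.prems, of \<rho>] by (simp add: r_def[symmetric])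
    next
      case False2: False
      have e: "\<rho> + 1 = r" using rl False2 by simp
      have "y + 1 = (q+1) * r" using y e by simp
      hence "(y+1) div r = q+1" "(y+1) mod r = 0" using False by auto
      moreover have "y div r = q" "y mod r = \<rho>" using q_def \<rho>_def by auto
      moreover have "\<rho> = rep b k - 1" using e r_def by simp
      moreover have "G b k \<rho> \<le> b" using G_r_minus1[OF Suc.prems, of k] calculation(5) by simp
      ultimately show ?thesis using Suc.prems by (simp add: r_def[symmetric])
    qed
  qed
qed

lemma G_L2: assumes "b > 0" "k \<ge> 2" shows "G b k x + 1 \<le> G b k (x + rep b k)"
proof -
  obtain k' where k: "k = Suc k'" and k': "k' \<ge> 1" using assms by (cases k) auto
  define r where "r = rep b k'"
  have rp: "r > 0" using rep_pos[OF assms(1) k'] by (simp add: r_def)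
  have rk: "rep b k = b * r + 1" by (simp add: k r_def rep_Suc2)
  define q where "q = x div r"
  define \<rho> where "\<rho> = x mod r"
  have x: "x = q * r + \<rho>" and rl: "\<rho> < r" using rp by (auto simp: q_def \<rho>_def)
  have Gx: "G b k x = q + G b k' \<rho>" by (simp add: k q_def \<rho>_def r_def)
  show ?thesis
  proof (cases "\<rho> + 1 < r")
    case True
    have e: "x + rep b k = (q + b) * r + (\<rho> + 1)" using x rk by (simp add: algebra_simps)
    have "(x + rep b k) div r = q + b" "(x + rep b k) mod r = \<rho> + 1"
      unfolding e using divmod_h[OF rp True, of "q+b"] by auto
    hence "G b k (x + rep b k) = q + b + G b k' (\<rho> + 1)" by (simp add: k r_def[symmetric])
    moreover have "G b k' \<rho> \<le> G b k' (\<rho> + 1) + (b - 1)" using G_L1[OF assms(1)] .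
    ultimately show ?thesis using Gx assms(1) by simp
  next
    case False
    have e1: "\<rho> + 1 = r" using rl False by simp
    have e: "x + rep b k = (q + b + 1) * r" using x rk e1 by (simp add: algebra_simps)
    have "(x + rep b k) div r = q + b + 1" "(x + rep b k) mod r = 0"
      unfolding e using rp by auto
    hence "G b k (x + rep b k) = q + b + 1" by (simp add: k r_def[symmetric])
    moreover have "\<rho> = rep b k' - 1" using e1 r_def by simp
    moreover have "G b k' \<rho> \<le> b" using G_r_minus1[OF assms(1), of k'] calculation(2) by simp
    ultimately show ?thesis using Gx by simp
  qed
qed

lemma G_L2it: assumes "b > 0" "k \<ge> 2" shows "G b k x + s \<le> G b k (x + s * rep b k)"
proof (induction s)
  case 0 then show ?case by simp
next
  case (Suc s)
  have "G b k (x + s * rep b k) + 1 \<le> G b k (x + s * rep b k + rep b k)" using G_L2[OF assms] .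
  then show ?case using Suc by (simp add: algebra_simps)
qed

lemma G_opt: assumes "b > 0" shows "G b k (\<Sum>t<k. c t * rep b t) \<le> (\<Sum>t<k. c t)"
proof (induction k)
  case 0 then show ?case by simp
next
  case (Suc k)
  define r where "r = rep b k"
  define y where "y = (\<Sum>t<k. c t * rep b t)"
  show ?case
  proof (cases "k = 0")
    case True then show ?thesis by simp
  next
    case False
    have rp: "r > 0" using rep_pos[OF assms, of k] False by (simp add: r_def)
    have "G b (Suc k) (\<Sum>t<Suc k. c t * rep b t) = G b (Suc k) (c k * r + y)"
      by (simp add: r_def y_def add.commute)
    also have "\<dots> = c k + y div r + G b k (y mod r)"
      using rp by (simp add: r_def[symmetric])
    also have "\<dots> \<le> c k + G b k y"
    proof (cases "k = 1")
      case True
      then have "y = 0" by (simp add: y_def)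
      then show ?thesis by simp
    next
      case False
      then have "k \<ge> 2" using \<open>k \<noteq> 0\<close> by simp
      from G_L2it[OF assms this, of "y mod r" "y div r"]
      show ?thesis by (simp add: r_def[symmetric])
    qed
    also have "\<dots> \<le> c k + (\<Sum>t<k. c t)" using Suc.IH by (simp add: y_def)
    finally show ?thesis by simp
  qed
qed

lemma G_ach: assumes "b > 0" "2 \<le> k \<or> n = 0"
  shows "\<exists>c. (\<Sum>t<k. c t * rep b t) = n \<and> (\<Sum>t<k. c t) = G b k n"
  using assms(2)
proof (induction k arbitrary: n)
  case 0 then show ?case by (intro exI[of _ "\<lambda>_. 0"]) simp
next
  case (Suc k)
  show ?case
  proof (cases "k = 0")
    case True
    then have "n = 0" using Suc.prems by simp
    then show ?thesis using True by (intro exI[of _ "\<lambda>_. 0"]) simp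
  next
    case False
    define r where "r = rep b k"
    have rp: "r > 0" using rep_pos[OF assms(1), of k] False by (simp add: r_def)
    have "2 \<le> k \<or> n mod r = 0"
    proof (cases "k = 1")
      case True then show ?thesis by (simp add: r_def rep_Suc)
    next
      case False then show ?thesis using \<open>k \<noteq> 0\<close> by simp
    qed
    from Suc.IH[OF this] obtain c where c: "(\<Sum>t<k. c t * rep b t) = n mod r"
      "(\<Sum>t<k. c t) = G b k (n mod r)" by blast
    define c' where "c' = c(k := n div r)"
    have s1: "(\<Sum>t<k. c' t * rep b t) = (\<Sum>t<k. c t * rep b t)"
      by (rule sum.cong) (auto simp: c'_def)
    have s2: "(\<Sum>t<k. c' t) = (\<Sum>t<k. c t)"
      by (rule sum.cong) (auto simp: c'_def)
    have "(\<Sum>t<Suc k. c' t * rep b t) = n div r * r + n mod r"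
      using s1 c by (simp add: c'_def r_def)
    also have "\<dots> = n" by simp
    finally have A: "(\<Sum>t<Suc k. c' t * rep b t) = n" .
    have B: "(\<Sum>t<Suc k. c' t) = G b (Suc k) n"
      using s2 c by (simp add: c'_def r_def)
    show ?thesis using A B by blast
  qed
qed




definition inS :: "nat \<Rightarrow> nat \<Rightarrow> nat \<Rightarrow> nat \<Rightarrow> bool" where
  "inS a b m w \<longleftrightarrow> (\<exists>L n. w = L * rep b m + a * n \<and> G b m n \<le> L)"

lemma sg_add: "y \<in> submonoid_gen A \<Longrightarrow> x \<in> submonoid_gen A \<Longrightarrow> x + y \<in> submonoid_gen A"
proof (induction y rule: submonoid_gen.induct)
  case zero then show ?case by simp
next
  case (step y g)
  then have "x + y + g \<in> submonoid_gen A" by (metis submonoid_gen.step)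
  then show ?case by (simp add: add.assoc)
qed

lemma sg_mult: "g \<in> A \<Longrightarrow> k * g \<in> submonoid_gen A"
proof (induction k)
  case 0 then show ?case by (simp add: submonoid_gen.zero)
next
  case (Suc k)
  then have "k * g + g \<in> submonoid_gen A" by (intro submonoid_gen.step) auto
  then show ?case by (simp add: add.commute)
qed

lemma sg_sum: "finite I \<Longrightarrow> (\<And>j. j \<in> I \<Longrightarrow> f j \<in> submonoid_gen A) \<Longrightarrow> sum f I \<in> submonoid_gen A"
  by (induction I rule: finite_induct) (auto intro: submonoid_gen.zero sg_add)

lemma sum_1m: "(\<Sum>j=1..m. f j) = (\<Sum>t<m. f (Suc t))"
  using sum.atLeast1_atMost_eq[of f m] by simp

lemma gen_sum: "(\<Sum>j=1..m. u j * gen a b m j)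
   = (\<Sum>t<m. u (Suc t)) * rep b m + a * (\<Sum>t<m. u (Suc t) * rep b t)"
  unfolding sum_1m gen_def
  by (simp add: sum_distrib_left sum_distrib_right algebra_simps sum.distrib)

lemma repr_inS: assumes "b > 0"
  shows "G b m (\<Sum>t<m. u (Suc t) * rep b t) \<le> (\<Sum>j=1..m. u j)"
  unfolding sum_1m using G_opt[OF assms, of m "\<lambda>t. u (Suc t)"] by simp

lemma inS_repr: assumes "b > 0" "m \<ge> 2" "G b m n \<le> L"
  shows "\<exists>u. L * rep b m + a * n = (\<Sum>j=1..m. u j * gen a b m j) \<and> (\<Sum>j=1..m. u j) = L"
proof -
  obtain c where c: "(\<Sum>t<m. c t * rep b t) = n" "(\<Sum>t<m. c t) = G b m n"
    using G_ach[OF assms(1), of m n] assms(2) by blast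
  define u where "u = (\<lambda>j. if j = 0 then 0 else c (j - 1) + (if j = 1 then L - G b m n else 0))"
  have us: "u (Suc t) = c t + (if t = 0 then L - G b m n else 0)" for t by (simp add: u_def)
  have m0: "0 \<in> {..<m}" using assms(2) by simp
  have s1: "(\<Sum>t<m. u (Suc t)) = L"
    unfolding us sum.distrib using c(2) assms(3) m0 by simp
  have s2: "(\<Sum>t<m. u (Suc t) * rep b t) = n"
    unfolding us by (simp add: algebra_simps sum.distrib c(1))
  have e1: "(\<Sum>j=1..m. u j * gen a b m j) = L * rep b m + a * n" by (simp only: gen_sum s1 s2)
  have e2: "(\<Sum>j=1..m. u j) = L" using s1 by (simp only: sum_1m)
  show ?thesis using e1 e2 by metis
qed

lemma G_subadd: assumes "b > 0" "m \<ge> 2" shows "G b m (n1 + n2) \<le> G b m n1 + G b m n2"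
proof -
  obtain c1 where c1: "(\<Sum>t<m. c1 t * rep b t) = n1" "(\<Sum>t<m. c1 t) = G b m n1"
    using G_ach[OF assms(1), of m n1] assms(2) by blast
  obtain c2 where c2: "(\<Sum>t<m. c2 t * rep b t) = n2" "(\<Sum>t<m. c2 t) = G b m n2"
    using G_ach[OF assms(1), of m n2] assms(2) by blast
  have "G b m (\<Sum>t<m. (c1 t + c2 t) * rep b t) \<le> (\<Sum>t<m. c1 t + c2 t)"
    by (rule G_opt[OF assms(1)])
  then show ?thesis using c1 c2 by (simp add: algebra_simps sum.distrib)
qed

lemma inS_add: assumes "b > 0" "m \<ge> 2" "inS a b m x" "inS a b m y" shows "inS a b m (x + y)"
proof -
  obtain L1 n1 where 1: "x = L1 * rep b m + a * n1" "G b m n1 \<le> L1" using assms(3) inS_def by auto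
  obtain L2 n2 where 2: "y = L2 * rep b m + a * n2" "G b m n2 \<le> L2" using assms(4) inS_def by auto
  have "x + y = (L1 + L2) * rep b m + a * (n1 + n2)" using 1 2 by (simp add: algebra_simps)
  moreover have "G b m (n1 + n2) \<le> L1 + L2" using G_subadd[OF assms(1,2), of n1 n2] 1 2 by simp
  ultimately show ?thesis unfolding inS_def by blast
qed

lemma inS_gen: assumes "b > 0" "m \<ge> 2" shows "inS a b m (rep b m + a * rep b p)"
proof (induction p rule: less_induct)
  case (less p)
  show ?case
  proof (cases "p < m")
    case True
    have "G b m (\<Sum>t<m. (if t = p then 1 else 0) * rep b t) \<le> (\<Sum>t<m. (if t = p then 1 else 0::nat))"
      by (rule G_opt[OF assms(1)])
    moreover have "(\<Sum>t<m. (if t = p then 1 else 0) * rep b t) = (\<Sum>t<m. if t = p then rep b t else 0)"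
      by (rule sum.cong) auto
    ultimately have "G b m (rep b p) \<le> 1" using True by simp
    then show ?thesis unfolding inS_def by (intro exI[of _ 1] exI[of _ "rep b p"]) simp
  next
    case False
    then obtain p' where p: "p = m + p'" by (metis le_add_diff_inverse not_less)
    have "p' < p" using p assms(2) by simp
    from less[OF this] obtain L n where Ln: "rep b m + a * rep b p' = L * rep b m + a * n" "G b m n \<le> L"
      unfolding inS_def by blast
    have "rep b m + a * rep b p = (L + a * b ^ p') * rep b m + a * n"
      using Ln(1) unfolding p rep_add by (simp add: algebra_simps)
    then show ?thesis unfolding inS_def using Ln(2)
      by (intro exI[of _ "L + a * b ^ p'"] exI[of _ n]) simp
  qed
qed

lemma Sab_char: assumes "b > 0" "m \<ge> 2" shows "w \<in> Sab a b m \<longleftrightarrow> inS a b m w"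
proof
  assume "w \<in> Sab a b m"
  then show "inS a b m w" unfolding Sab_def
  proof (induction w rule: submonoid_gen.induct)
    case zero then show ?case unfolding inS_def by (intro exI[of _ 0] exI[of _ 0]) simp
  next
    case (step x g)
    then obtain j where j: "j \<ge> 1" "g = gen a b m j" by auto
    have "inS a b m g" using inS_gen[OF assms, of a "j - 1"] j by (simp add: gen_def)
    then show ?case using inS_add[OF assms step.IH] by simp
  qed
next
  assume "inS a b m w"
  then obtain L n where Ln: "w = L * rep b m + a * n" "G b m n \<le> L" unfolding inS_def by blast
  obtain u where u: "w = (\<Sum>j=1..m. u j * gen a b m j)"
    using inS_repr[OF assms Ln(2), of a] Ln(1) by auto
  have "(\<Sum>j=1..m. u j * gen a b m j) \<in> Sab a b m" unfolding Sab_def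
    by (rule sg_sum) (auto intro!: sg_mult)
  then show "w \<in> Sab a b m" using u by simp
qed




lemma G_zero: assumes "b > 0" "k \<ge> 2" "G b k n = 0" shows "n = 0"
  using assms(2,3)
proof (induction k arbitrary: n rule: nat_induct_at_least)
  case base then show ?case by (simp add: numeral_2_eq_2 rep_def)
next
  case (Suc k)
  have rp: "rep b k > 0" using rep_pos[OF assms(1)] Suc.hyps by simp
  from Suc.prems have "n div rep b k = 0" "G b k (n mod rep b k) = 0" by auto
  then have "n < rep b k" "n mod rep b k = 0" using Suc.IH rp by (auto simp: div_eq_0_iff)
  then show ?case by simp
qed

lemma mult_Sab: assumes "b > 0" "m \<ge> 2" shows "multiplicity_ns (Sab a b m) = rep b m"
  unfolding multiplicity_ns_def
proof (rule Least_equality)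
  have "inS a b m (rep b m)" unfolding inS_def by (intro exI[of _ 1] exI[of _ 0]) simp
  then show "rep b m \<in> Sab a b m \<and> rep b m \<noteq> 0"
    using Sab_char[OF assms] rep_pos[OF assms(1), of m] assms(2) by simp
next
  fix y assume y: "y \<in> Sab a b m \<and> y \<noteq> 0"
  then obtain L n where Ln: "y = L * rep b m + a * n" "G b m n \<le> L"
    using Sab_char[OF assms] inS_def by auto
  have "L \<noteq> 0"
  proof
    assume "L = 0"
    then have "n = 0" using Ln G_zero[OF assms] by simp
    then show False using y Ln \<open>L = 0\<close> by simp
  qed
  then show "rep b m \<le> y" using Ln by (cases L) auto
qed

lemma Apery_iff: "w \<in> Apery S \<longleftrightarrow> w \<in> S \<and> \<not> (\<exists>x\<in>S. w = x + multiplicity_ns S)"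
proof -
  have "(int w - int (multiplicity_ns S) \<in> int ` S) \<longleftrightarrow> (\<exists>x\<in>S. w = x + multiplicity_ns S)"
  proof
    assume "int w - int (multiplicity_ns S) \<in> int ` S"
    then obtain x where "x \<in> S" "int w - int (multiplicity_ns S) = int x" by auto
    then show "\<exists>x\<in>S. w = x + multiplicity_ns S" by (intro bexI[of _ x]) auto
  next
    assume "\<exists>x\<in>S. w = x + multiplicity_ns S"
    then obtain x where "x \<in> S" "w = x + multiplicity_ns S" by auto
    then show "int w - int (multiplicity_ns S) \<in> int ` S" by auto
  qed
  then show ?thesis unfolding Apery_def by auto
qed

lemma core: assumes "b > 0" "m \<ge> 2" "coprime (rep b m) a" "n < rep b m"
  "L * rep b m + a * N = K * rep b m + a * n"
  shows "\<exists>s. N = n + s * rep b m \<and> K = L + a * s \<and> G b m n + s \<le> G b m N"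
proof -
  define R where "R = rep b m"
  have Rp: "R > 0" using rep_pos[OF assms(1), of m] assms(2) by (simp add: R_def)
  have e: "int R * (int K - int L) = int a * (int N - int n)"
    using arg_cong[OF assms(5), of int] by (simp add: R_def algebra_simps)
  have cop: "coprime (int R) (int a)" using assms(3) by (simp add: R_def)
  have "int R dvd int a * (int N - int n)" using e by (metis dvd_triv_left)
  then have "int R dvd (int N - int n)" using cop
    by (metis coprime_dvd_mult_right_iff mult.commute)
  then obtain s0 where s0: "int N - int n = int R * s0" by (auto elim: dvdE)
  have "s0 \<ge> 0"
  proof (rule ccontr)
    assume "\<not> s0 \<ge> 0"
    then have "s0 \<le> -1" by simp
    then have "int R * s0 \<le> int R * (-1)" using Rp by (intro mult_left_mono) auto
    then show False using s0 assms(4) R_def by simp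
  qed
  define s where "s = nat s0"
  have N: "N = n + s * R" using s0 \<open>s0 \<ge> 0\<close> unfolding s_def
    by (metis add.commute diff_eq_eq int_nat_eq mult.commute nat_int of_nat_add of_nat_mult)
  have "int R * (int K - int L) = int R * (int a * int s)" using e s0 \<open>s0 \<ge> 0\<close>
    by (simp add: s_def algebra_simps)
  then have "int K - int L = int a * int s" using Rp by simp
  then have "int K = int (L + a * s)" by simp
  then have K: "K = L + a * s" by (simp only: of_nat_eq_iff)
  have "G b m n + s \<le> G b m N" using G_L2it[OF assms(1,2), of n s] N by (simp add: R_def)
  then show ?thesis using N K R_def by blast
qed




lemma Ap_char: assumes "b > 0" "m \<ge> 2" "a > 0" "coprime (rep b m) a"
  shows "w \<in> Apery (Sab a b m) \<longleftrightarrow> (\<exists>n < rep b m. w = G b m n * rep b m + a * n)"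
proof -
  define R where "R = rep b m"
  have Rp: "R > 0" using rep_pos[OF assms(1), of m] assms(2) by (simp add: R_def)
  have Ap: "w \<in> Apery (Sab a b m) \<longleftrightarrow> inS a b m w \<and> \<not> (\<exists>x. inS a b m x \<and> w = x + R)"
    unfolding Apery_iff mult_Sab[OF assms(1,2)] using Sab_char[OF assms(1,2)] by (auto simp: R_def)
  show ?thesis
  proof
    assume "w \<in> Apery (Sab a b m)"
    then have w: "inS a b m w" and nw: "\<not> (\<exists>x. inS a b m x \<and> w = x + R)" using Ap by auto
    obtain L N where LN: "w = L * R + a * N" "G b m N \<le> L" using w inS_def R_def by auto
    define n where "n = N mod R"
    define s where "s = N div R"
    have N: "N = n + s * R" by (simp add: n_def s_def)
    have nl: "n < R" using Rp by (simp add: n_def)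
    have Gs: "G b m n + s \<le> G b m N" using G_L2it[OF assms(1,2), of n s] N by (simp add: R_def)
    have w2: "w = (L + a * s) * R + a * n" using LN N by (simp add: algebra_simps)
    show "\<exists>n < rep b m. w = G b m n * rep b m + a * n"
    proof (cases "G b m n < L + a * s")
      case True
      have "inS a b m ((L + a * s - 1) * R + a * n)" unfolding inS_def R_def
        using True by (intro exI[of _ "L + a * s - 1"] exI[of _ n]) simp
      moreover have "w = (L + a * s - 1) * R + a * n + R" using w2 True
        by (cases "L + a * s") (auto simp: algebra_simps)
      ultimately show ?thesis using nw by blast
    next
      case False
      then have "s + a * s \<le> 0" using Gs LN(2) by linarith
      then have "s = 0" by simp
      then have "G b m n = L" using False Gs LN(2) by simp
      then show ?thesis using w2 nl \<open>s = 0\<close> R_def by auto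
    qed
  next
    assume "\<exists>n < rep b m. w = G b m n * rep b m + a * n"
    then obtain n where n: "n < R" "w = G b m n * R + a * n" by (auto simp: R_def)
    have w: "inS a b m w" unfolding inS_def using n unfolding R_def by blast
    have "\<not> (\<exists>x. inS a b m x \<and> w = x + R)"
    proof
      assume "\<exists>x. inS a b m x \<and> w = x + R"
      then obtain L N where LN: "w = L * R + a * N + R" "G b m N \<le> L"
        unfolding inS_def R_def by auto
      have "(L + 1) * rep b m + a * N = G b m n * rep b m + a * n"
        using LN n by (simp add: R_def algebra_simps)
      from core[OF assms(1,2,4) n(1)[unfolded R_def] this] obtain s where
        "G b m n = L + 1 + a * s" "G b m n + s \<le> G b m N" by blast
      then show False using LN(2) by simp
    qed
    then show "w \<in> Apery (Sab a b m)" using Ap w by simp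
  qed
qed

lemma len_char: assumes "b > 0" "m \<ge> 2" "a > 0" "coprime (rep b m) a" "n < rep b m"
  shows "len_S a b m (G b m n * rep b m + a * n) = G b m n"
  unfolding len_S_def
proof (rule the_equality)
  obtain u where u: "G b m n * rep b m + a * n = (\<Sum>j=1..m. u j * gen a b m j)"
    "(\<Sum>j=1..m. u j) = G b m n"
    using inS_repr[OF assms(1,2), of n "G b m n" a] by auto
  then show "\<exists>u. G b m n * rep b m + a * n = (\<Sum>j = 1..m. u j * gen a b m j) \<and> G b m n = (\<Sum>j = 1..m. u j)"
    by metis
next
  fix l assume "\<exists>u. G b m n * rep b m + a * n = (\<Sum>j = 1..m. u j * gen a b m j) \<and> l = (\<Sum>j = 1..m. u j)"
  then obtain u where u: "G b m n * rep b m + a * n = (\<Sum>j = 1..m. u j * gen a b m j)"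
    "l = (\<Sum>j = 1..m. u j)" by blast
  define N where "N = (\<Sum>t<m. u (Suc t) * rep b t)"
  have l: "l = (\<Sum>t<m. u (Suc t))" using u(2) sum_1m by metis
  have GN: "G b m N \<le> l" using repr_inS[OF assms(1), of m u] u(2) by (simp add: N_def)
  have "l * rep b m + a * N = G b m n * rep b m + a * n"
    using u(1) gen_sum[of u a b m] l by (simp add: N_def)
  from core[OF assms(1,2,4,5) this] obtain s where
    "G b m n = l + a * s" "G b m n + s \<le> G b m N" by blast
  then show "l = G b m n" using GN by simp
qed




theorem corollary19:
  fixes a b i :: nat
  assumes "a > 0" and "b > 1" and "i \<ge> 3"
    and "gcd (rep b i) a = 1" and "gcd (rep b (i - 1)) a = 1"
  shows "w \<in> Apery (Sab a b i) \<longleftrightarrow>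
    (w = b * gen a b i i \<or>
     (\<exists>w' \<in> Apery (Sab a b (i - 1)). \<exists>u \<in> {0..b - 1}.
        w = w' + b ^ (i - 1) * len_S a b (i - 1) w' + u * gen a b i i))"
proof -
  obtain k where i: "i = Suc k" and k: "k \<ge> 2" using assms(3) by (cases i) auto
  have b0: "b > 0" using assms(2) by simp
  define R where "R = rep b i"
  define r where "r = rep b k"
  have rp: "r > 0" using rep_pos[OF b0, of k] k by (simp add: r_def)
  have R1: "R = b * r + 1" by (simp add: R_def r_def i rep_Suc2)
  have R2: "R = r + b ^ k" by (simp add: R_def r_def i rep_Suc)
  have g: "gen a b i i = R + a * r" by (simp add: gen_def R_def r_def i)
  have Gi: "G b i n = n div r + G b k (n mod r)" for n by (simp add: i r_def)
  have copi: "coprime (rep b i) a" using assms(4) by (simp add: coprime_iff_gcd_eq_1)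
  have copk: "coprime (rep b k) a" using assms(5) i by (simp add: coprime_iff_gcd_eq_1)
  have Api: "w \<in> Apery (Sab a b i) \<longleftrightarrow> (\<exists>n < R. w = G b i n * R + a * n)" for w
    using Ap_char[OF b0 _ assms(1) copi] k i by (simp add: R_def)
  have Apk: "w' \<in> Apery (Sab a b k) \<longleftrightarrow> (\<exists>n < r. w' = G b k n * r + a * n)" for w'
    using Ap_char[OF b0 k assms(1) copk] by (simp add: r_def)
  have lenk: "n < r \<Longrightarrow> len_S a b k (G b k n * r + a * n) = G b k n" for n
    using len_char[OF b0 k assms(1) copk] by (simp add: r_def)
  have ik: "i - 1 = k" using i by simp
  have key: "G b k n' * r + a * n' + b ^ k * G b k n' + u * (R + a * r)
      = (u + G b k n') * R + a * (u * r + n')" for n' u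
    unfolding R2 by (simp add: algebra_simps)
  show ?thesis
    unfolding ik g
  proof
    assume "w \<in> Apery (Sab a b i)"
    then obtain n where n: "n < R" "w = G b i n * R + a * n" using Api by auto
    define u where "u = n div r"
    define n' where "n' = n mod r"
    have nn: "n = u * r + n'" by (simp add: u_def n'_def)
    have n'r: "n' < r" using rp by (simp add: n'_def)
    have "u * r + n' \<le> b * r" using nn n(1) R1 by simp
    then have "u * r \<le> b * r" by (rule le_trans[rotated]) simp
    then have ub: "u \<le> b" using rp by simp
    show "w = b * (R + a * r) \<or> (\<exists>w'\<in>Apery (Sab a b k). \<exists>u\<in>{0..b - 1}.
        w = w' + b ^ k * len_S a b k w' + u * (R + a * r))"
    proof (cases "u = b")
      case True
      then have "n' = 0" using nn n(1) R1 by simp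
      then have "n = b * r" using nn True by simp
      moreover have "G b i (b * r) = b" using G_top_eq[OF b0, of k] k by (simp add: i r_def)
      ultimately have "w = b * (R + a * r)" using n(2) by (simp add: algebra_simps)
      then show ?thesis by simp
    next
      case False
      then have ub': "u \<in> {0..b-1}" using ub by simp
      define w' where "w' = G b k n' * r + a * n'"
      have w'A: "w' \<in> Apery (Sab a b k)" using Apk n'r w'_def by blast
      have "G b i n = u + G b k n'" using Gi[of n] by (simp add: u_def n'_def)
      then have "w = w' + b ^ k * len_S a b k w' + u * (R + a * r)"
        using n(2) nn key[of n' u] lenk[OF n'r] by (simp add: w'_def)
      then show ?thesis using w'A ub' by blast
    qed
  next
    assume "w = b * (R + a * r) \<or> (\<exists>w'\<in>Apery (Sab a b k). \<exists>u\<in>{0..b - 1}.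
        w = w' + b ^ k * len_S a b k w' + u * (R + a * r))"
    then show "w \<in> Apery (Sab a b i)"
    proof
      assume w: "w = b * (R + a * r)"
      have "G b i (b * r) = b" using G_top_eq[OF b0, of k] k by (simp add: i r_def)
      moreover have "b * r < R" using R1 by simp
      ultimately show ?thesis using Api w by (metis add_mult_distrib2 mult.assoc mult.commute)
    next
      assume "\<exists>w'\<in>Apery (Sab a b k). \<exists>u\<in>{0..b - 1}.
        w = w' + b ^ k * len_S a b k w' + u * (R + a * r)"
      then obtain w' u where w'A: "w' \<in> Apery (Sab a b k)" and ub: "u \<le> b - 1"
        and w: "w = w' + b ^ k * len_S a b k w' + u * (R + a * r)" by auto
      obtain n' where n': "n' < r" "w' = G b k n' * r + a * n'" using w'A Apk by auto
      define n where "n = u * r + n'"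
      have "n < (u + 1) * r" using n' by (simp add: n_def)
      also have "\<dots> \<le> b * r" using ub assms(2) by (intro mult_right_mono) auto
      also have "\<dots> < R" using R1 by simp
      finally have nR: "n < R" .
      have "G b i n = u + G b k n'" using Gi[of n] divmod_h[OF rp n'(1), of u] by (simp add: n_def)
      then have "w = G b i n * R + a * n"
        using w n' key[of n' u] lenk[OF n'(1)] by (simp add: n_def)
      then show ?thesis using Api nR by blast
    qed
  qed
qed


end
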